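(* Let $K$ be a field of characteristic $0$, let $W\le S_d$ be a permutation group and let $\chi$ be a one-dimensional character of $W$. For every $n\in\mathbb N_0$, $$g_n(\chi;x_0,\dots,x_n)=Z(\chi;p_1,\dots,p_d),$$ where $p_s=x_0^s+\cdots+x_n^s$ are the power sums in the $n+1$ variables $x_0,\dots,x_n$.
   Context: A one-dimensional character of $W$ is a homomorphism $W\to K^\times$. $\mathbb N_0=\{0,1,2,\dots\}$, $[0,n]=\{0,1,\dots,n\}$. $W$ acts on $[0,n]^d$ by $\sigma(i_1,\dots,i_d)=(i_{\sigma^{-1}(1)},\dots,i_{\sigma^{-1}(d)})$. $J(n,d,\chi)$ is the set of those $j\in[0,n]^d$ that are lexicographically minimal in their $W$-orbit and satisfy $\chi(\sigma)=1$ for all $\sigma$ in the stabilizer $W_j$. $g_n(\chi;x_0,\dots,x_n)=\sum_{j\in J(n,d,\chi)}x_{j_1}\cdots x_{j_d}$. $Z(\chi;p_1,\dots,p_d)=|W|^{-1}\sum_{\sigma\in W}\chi(\sigma)p_1^{c_1(\sigma)}\cdots p_d^{c_d(\sigma)}$, where $c_s(\sigma)$ is the number of cycles of length $s$ of $\sigma$. *)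

theory Defs
  imports "HOL-Combinatorics.Permutations" "HOL-Combinatorics.Orbits"
begin

definition perm_group :: "nat \<Rightarrow> (nat \<Rightarrow> nat) set \<Rightarrow> bool" where
  "perm_group d W \<longleftrightarrow> (\<forall>\<sigma>\<in>W. \<sigma> permutes {1..d}) \<and> id \<in> W \<and>
     (\<forall>\<sigma>\<in>W. \<forall>\<tau>\<in>W. \<sigma> \<circ> \<tau> \<in> W) \<and> (\<forall>\<sigma>\<in>W. inv \<sigma> \<in> W)"

definition one_dim_char :: "(nat \<Rightarrow> nat) set \<Rightarrow> ((nat \<Rightarrow> nat) \<Rightarrow> 'a::field) \<Rightarrow> bool" where
  "one_dim_char W \<chi> \<longleftrightarrow> (\<forall>\<sigma>\<in>W. \<chi> \<sigma> \<noteq> 0) \<and>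
     (\<forall>\<sigma>\<in>W. \<forall>\<tau>\<in>W. \<chi> (\<sigma> \<circ> \<tau>) = \<chi> \<sigma> * \<chi> \<tau>)"

text \<open>Tuples (i_1,...,i_d) in [0,n]^d are lists of length d; the k-th entry i_k is j ! (k-1).\<close>
definition tuples :: "nat \<Rightarrow> nat \<Rightarrow> nat list set" where
  "tuples n d = {j. length j = d \<and> (\<forall>k<d. j ! k \<le> n)}"

definition act :: "(nat \<Rightarrow> nat) \<Rightarrow> nat list \<Rightarrow> nat list" where
  "act \<sigma> j = map (\<lambda>k. j ! (inv \<sigma> k - 1)) [1..<length j + 1]"

definition lex_le :: "nat list \<Rightarrow> nat list \<Rightarrow> bool" where
  "lex_le xs ys \<longleftrightarrow> xs = ys \<or> (xs, ys) \<in> lexord {(a, b). a < b}"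

definition stabilizer :: "(nat \<Rightarrow> nat) set \<Rightarrow> nat list \<Rightarrow> (nat \<Rightarrow> nat) set" where
  "stabilizer W j = {\<sigma>\<in>W. act \<sigma> j = j}"

definition J_set :: "nat \<Rightarrow> nat \<Rightarrow> (nat \<Rightarrow> nat) set \<Rightarrow> ((nat \<Rightarrow> nat) \<Rightarrow> 'a::field) \<Rightarrow> nat list set" where
  "J_set n d W \<chi> = {j\<in>tuples n d. (\<forall>\<sigma>\<in>W. lex_le j (act \<sigma> j)) \<and>
                                   (\<forall>\<sigma>\<in>stabilizer W j. \<chi> \<sigma> = 1)}"

definition g_poly :: "nat \<Rightarrow> nat \<Rightarrow> (nat \<Rightarrow> nat) set \<Rightarrow> ((nat \<Rightarrow> nat) \<Rightarrow> 'a::field) \<Rightarrow> (nat \<Rightarrow> 'a) \<Rightarrow> 'a" where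
  "g_poly n d W \<chi> x = (\<Sum>j\<in>J_set n d W \<chi>. \<Prod>k<d. x (j ! k))"

definition cycle_count :: "nat \<Rightarrow> (nat \<Rightarrow> nat) \<Rightarrow> nat \<Rightarrow> nat" where
  "cycle_count d \<sigma> s = card {orbit \<sigma> a | a. a \<in> {1..d} \<and> card (orbit \<sigma> a) = s}"

definition Z_poly :: "nat \<Rightarrow> (nat \<Rightarrow> nat) set \<Rightarrow> ((nat \<Rightarrow> nat) \<Rightarrow> 'a::field) \<Rightarrow> (nat \<Rightarrow> 'a) \<Rightarrow> 'a" where
  "Z_poly d W \<chi> p = (1 / of_nat (card W)) *
     (\<Sum>\<sigma>\<in>W. \<chi> \<sigma> * (\<Prod>s\<in>{1..d}. p s ^ cycle_count d \<sigma> s))"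

end

theory Submission imports Defs "HOL-Library.FuncSet" "HOL-Library.List_Lexorder" begin

lemma nth_act: "k < length j \<Longrightarrow> act \<sigma> j ! k = j ! (inv \<sigma> (Suc k) - 1)"
  unfolding act_def by (simp add: nth_map del: upt_Suc)

lemma length_act[simp]: "length (act \<sigma> j) = length j"
  unfolding act_def by (simp del: upt_Suc)

lemma inv_perm_range:
  assumes "\<sigma> permutes {1..d}" "k < d"
  shows "inv \<sigma> (Suc k) \<in> {1..d}"
  using permutes_in_image[OF permutes_inv[OF assms(1)]] assms(2) by simp

lemma act_tuples:
  assumes "\<sigma> permutes {1..d}" "j \<in> tuples n d"
  shows "act \<sigma> j \<in> tuples n d"
proof -
  have "length j = d" "\<forall>k<d. j ! k \<le> n" using assms(2) unfolding tuples_def by auto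
  moreover have "\<And>k. k < d \<Longrightarrow> inv \<sigma> (Suc k) - 1 < d"
    using inv_perm_range[OF assms(1)] by fastforce
  ultimately show ?thesis unfolding tuples_def by (auto simp: nth_act)
qed

lemma act_id[simp]: "act id j = j"
  by (rule nth_equalityI) (auto simp: nth_act inv_id)

lemma act_comp:
  assumes "\<sigma> permutes {1..d}" "\<tau> permutes {1..d}" "length j = d"
  shows "act \<sigma> (act \<tau> j) = act (\<sigma> \<circ> \<tau>) j"
proof (rule nth_equalityI)
  fix k assume k: "k < length (act \<sigma> (act \<tau> j))"
  hence kd: "k < d" using assms by simp
  have r: "inv \<sigma> (Suc k) \<in> {1..d}" using inv_perm_range[OF assms(1) kd] .
  hence i: "inv \<sigma> (Suc k) - 1 < length (act \<tau> j)" using assms by auto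
  have "inv (\<sigma> \<circ> \<tau>) = inv \<tau> \<circ> inv \<sigma>"
    using o_inv_distrib permutes_bij assms(1,2) by blast
  have e: "act \<tau> j ! (inv \<sigma> (Suc k) - 1) = j ! (inv \<tau> (inv \<sigma> (Suc k)) - 1)"
    using nth_act[of "inv \<sigma> (Suc k) - 1" j \<tau>] i r by simp
  then show "act \<sigma> (act \<tau> j) ! k = act (\<sigma> \<circ> \<tau>) j ! k"
    using kd assms \<open>inv (\<sigma> \<circ> \<tau>) = _\<close> by (simp add: nth_act)
qed simp

definition orb :: "(nat \<Rightarrow> nat) set \<Rightarrow> nat list \<Rightarrow> nat list set" where
  "orb W j = (\<lambda>\<sigma>. act \<sigma> j) ` W"

context
  fixes d :: nat and W :: "(nat \<Rightarrow> nat) set"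
  assumes G: "perm_group d W"
begin

lemma G_perm: "\<sigma> \<in> W \<Longrightarrow> \<sigma> permutes {1..d}"
  using G unfolding perm_group_def by blast
lemma G_id: "id \<in> W"
  using G unfolding perm_group_def by blast
lemma G_comp: "\<sigma> \<in> W \<Longrightarrow> \<tau> \<in> W \<Longrightarrow> \<sigma> \<circ> \<tau> \<in> W"
  using G unfolding perm_group_def by blast
lemma G_inv: "\<sigma> \<in> W \<Longrightarrow> inv \<sigma> \<in> W"
  using G unfolding perm_group_def by blast
lemma G_fin: "finite W"
proof -
  have "W \<subseteq> {\<sigma>. \<sigma> permutes {1..d}}" using G_perm by blast
  thus ?thesis using finite_permutations[of "{1..d}"] finite_subset by blast
qed
lemma G_inv1: "\<sigma> \<in> W \<Longrightarrow> inv \<sigma> \<circ> \<sigma> = id"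
  using G_perm permutes_inv_o by blast
lemma G_inv2: "\<sigma> \<in> W \<Longrightarrow> \<sigma> \<circ> inv \<sigma> = id"
  using G_perm permutes_inv_o by blast

lemma stab_sub: "stabilizer W j \<subseteq> W" unfolding stabilizer_def by auto

lemma act_inv_eq:
  assumes "\<sigma> \<in> W" "length j = d" "act \<sigma> j = k"
  shows "act (inv \<sigma>) k = j"
proof -
  have "act (inv \<sigma>) k = act (inv \<sigma> \<circ> \<sigma>) j"
    using assms act_comp[OF G_perm[OF G_inv] G_perm] by blast
  thus ?thesis using G_inv1 assms by simp
qed

lemma char_id:
  assumes C: "one_dim_char W (\<chi> :: _ \<Rightarrow> 'a::field)"
  shows "\<chi> id = 1"
proof -
  have "\<chi> id = \<chi> id * \<chi> id" using C G_id unfolding one_dim_char_def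
    by (metis comp_id)
  moreover have "\<chi> id \<noteq> 0" using C G_id unfolding one_dim_char_def by blast
  ultimately show ?thesis by (metis mult_cancel_left1)
qed

lemma stab_sum:
  assumes C: "one_dim_char W (\<chi> :: _ \<Rightarrow> 'a::field)" and j: "length j = d"
  shows "(\<Sum>\<sigma>\<in>stabilizer W j. \<chi> \<sigma>) =
     (if \<forall>\<sigma>\<in>stabilizer W j. \<chi> \<sigma> = 1 then of_nat (card (stabilizer W j)) else 0)"
proof (cases "\<forall>\<sigma>\<in>stabilizer W j. \<chi> \<sigma> = 1")
  case True then show ?thesis by simp
next
  case False
  then obtain \<tau> where t: "\<tau> \<in> stabilizer W j" "\<chi> \<tau> \<noteq> 1" by blast
  have tW: "\<tau> \<in> W" using t stab_sub by blast
  let ?H = "stabilizer W j"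
  have "(\<Sum>\<sigma>\<in>?H. \<chi> (\<tau> \<circ> \<sigma>)) = (\<Sum>\<sigma>\<in>?H. \<chi> \<sigma>)"
  proof (rule sum.reindex_bij_witness[where i="\<lambda>\<sigma>. inv \<tau> \<circ> \<sigma>" and j="\<lambda>\<sigma>. \<tau> \<circ> \<sigma>"])
    fix a assume a: "a \<in> ?H"
    hence aW: "a \<in> W" using stab_sub by blast
    show "inv \<tau> \<circ> (\<tau> \<circ> a) = a" using G_inv1[OF tW] by (simp add: o_assoc)
    show "\<tau> \<circ> a \<in> ?H" using a t G_comp act_comp[OF G_perm[OF tW] G_perm[OF aW] j]
      unfolding stabilizer_def by auto
    show "\<chi> (\<tau> \<circ> a) = \<chi> (\<tau> \<circ> a)" by simp
  next
    fix b assume b: "b \<in> ?H"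
    hence bW: "b \<in> W" using stab_sub by blast
    show "\<tau> \<circ> (inv \<tau> \<circ> b) = b" using G_inv2[OF tW] by (simp add: o_assoc)
    have "act (inv \<tau>) j = j" using act_inv_eq[OF tW j] t unfolding stabilizer_def by auto
    then show "inv \<tau> \<circ> b \<in> ?H" using b G_comp G_inv[OF tW]
        act_comp[OF G_perm[OF G_inv[OF tW]] G_perm[OF bW] j]
      unfolding stabilizer_def by auto
  qed
  moreover have "(\<Sum>\<sigma>\<in>?H. \<chi> (\<tau> \<circ> \<sigma>)) = \<chi> \<tau> * (\<Sum>\<sigma>\<in>?H. \<chi> \<sigma>)"
    unfolding sum_distrib_left using C tW stab_sub unfolding one_dim_char_def
    by (intro sum.cong) (auto simp: subset_iff)
  ultimately have "(\<chi> \<tau> - 1) * (\<Sum>\<sigma>\<in>?H. \<chi> \<sigma>) = 0" by (simp add: algebra_simps)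
  then show ?thesis using t False by auto
qed


lemma act_in_orb: "\<tau> \<in> W \<Longrightarrow> act \<tau> j \<in> orb W j"
  unfolding orb_def by blast

lemma self_in_orb: "j \<in> orb W j"
  using act_in_orb[OF G_id] by simp

lemma orb_tuples: "j \<in> tuples n d \<Longrightarrow> orb W j \<subseteq> tuples n d"
  unfolding orb_def using act_tuples G_perm by blast

lemma orb_act:
  assumes "length j = d" "\<tau> \<in> W"
  shows "orb W (act \<tau> j) = orb W j"
proof
  show "orb W (act \<tau> j) \<subseteq> orb W j"
    unfolding orb_def using act_comp[OF G_perm G_perm[OF assms(2)] assms(1)] G_comp[OF _ assms(2)]
    by auto
  show "orb W j \<subseteq> orb W (act \<tau> j)"
  proof
    fix y assume "y \<in> orb W j"
    then obtain \<sigma> where s: "\<sigma> \<in> W" "y = act \<sigma> j" unfolding orb_def by blast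
    have "act (\<sigma> \<circ> inv \<tau>) (act \<tau> j) = act (\<sigma> \<circ> inv \<tau> \<circ> \<tau>) j"
      using act_comp[OF G_perm[OF G_comp[OF s(1) G_inv[OF assms(2)]]] G_perm[OF assms(2)] assms(1)] .
    also have "\<dots> = y" using s G_inv1[OF assms(2)] by (simp add: o_assoc[symmetric])
    finally show "y \<in> orb W (act \<tau> j)" unfolding orb_def
      using G_comp[OF s(1) G_inv[OF assms(2)]] by (metis image_eqI)
  qed
qed

lemma orb_mem_eq:
  assumes "length j = d" "k \<in> orb W j"
  shows "orb W k = orb W j"
  using assms orb_act unfolding orb_def by blast

lemma orbit_stab:
  assumes j: "length j = d"
  shows "card (orb W j) * card (stabilizer W j) = card W"
proof -
  have fin: "finite (orb W j)" unfolding orb_def using G_fin by simp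
  have "card W = (\<Sum>\<sigma>\<in>W. (1::nat))" by simp
  also have "\<dots> = (\<Sum>y\<in>orb W j. \<Sum>\<sigma>\<in>{\<sigma>\<in>W. act \<sigma> j = y}. 1)"
    by (rule sum.group[symmetric]) (use G_fin fin in \<open>auto simp: orb_def\<close>)
  also have "\<dots> = (\<Sum>y\<in>orb W j. card (stabilizer W j))"
  proof (rule sum.cong[OF refl])
    fix y assume "y \<in> orb W j"
    then obtain \<tau> where t: "\<tau> \<in> W" "y = act \<tau> j" unfolding orb_def by blast
    have "(\<Sum>\<sigma>\<in>stabilizer W j. (1::nat)) = (\<Sum>\<sigma>\<in>{\<sigma>\<in>W. act \<sigma> j = y}. 1)"
    proof (rule sum.reindex_bij_witness[where i="\<lambda>\<sigma>. inv \<tau> \<circ> \<sigma>" and j="\<lambda>\<sigma>. \<tau> \<circ> \<sigma>"])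
      fix a assume a: "a \<in> stabilizer W j"
      hence aW: "a \<in> W" using stab_sub by blast
      show "inv \<tau> \<circ> (\<tau> \<circ> a) = a" using G_inv1[OF t(1)] by (simp add: o_assoc)
      show "\<tau> \<circ> a \<in> {\<sigma>\<in>W. act \<sigma> j = y}" using a t G_comp act_comp[OF G_perm[OF t(1)] G_perm[OF aW] j]
        unfolding stabilizer_def by auto
    next
      fix b assume b: "b \<in> {\<sigma>\<in>W. act \<sigma> j = y}"
      show "\<tau> \<circ> (inv \<tau> \<circ> b) = b" using G_inv2[OF t(1)] by (simp add: o_assoc)
      have "act (inv \<tau> \<circ> b) j = act (inv \<tau>) (act b j)"
        using act_comp[OF G_perm[OF G_inv[OF t(1)]] G_perm j] b by force
      also have "\<dots> = j" using b t act_inv_eq[OF t(1) j] by simp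
      finally show "inv \<tau> \<circ> b \<in> stabilizer W j" using b G_comp G_inv[OF t(1)]
        unfolding stabilizer_def by auto
    qed simp
    then show "(\<Sum>\<sigma>\<in>{\<sigma>\<in>W. act \<sigma> j = y}. (1::nat)) = card (stabilizer W j)" by simp
  qed
  also have "\<dots> = card (orb W j) * card (stabilizer W j)" by simp
  finally show ?thesis by simp
qed

lemma cond_act1:
  assumes C: "one_dim_char W (\<chi> :: _ \<Rightarrow> 'a::field)" and j: "length j = d" and t: "\<tau> \<in> W"
    and c: "\<forall>\<sigma>\<in>stabilizer W j. \<chi> \<sigma> = 1"
  shows "\<forall>\<sigma>\<in>stabilizer W (act \<tau> j). \<chi> \<sigma> = 1"
proof
  fix s assume s: "s \<in> stabilizer W (act \<tau> j)"
  hence sW: "s \<in> W" and sf: "act s (act \<tau> j) = act \<tau> j" unfolding stabilizer_def by auto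
  have itW: "inv \<tau> \<in> W" using G_inv[OF t] .
  define r where "r = inv \<tau> \<circ> s \<circ> \<tau>"
  have rW: "r \<in> W" unfolding r_def using G_comp itW sW t by blast
  have "act r j = act (inv \<tau>) (act s (act \<tau> j))"
    unfolding r_def using act_comp[OF G_perm[OF itW] G_perm[OF G_comp[OF sW t]] j]
      act_comp[OF G_perm[OF sW] G_perm[OF t] j] by (simp add: o_assoc)
  also have "\<dots> = j" using sf act_inv_eq[OF t j] by simp
  finally have "\<chi> r = 1" using c rW unfolding stabilizer_def by auto
  have "\<tau> \<circ> r \<circ> inv \<tau> = s" unfolding r_def using G_inv1[OF t] G_inv2[OF t]
    by (simp add: o_assoc) (metis comp_assoc comp_id id_comp)
  hence "\<chi> s = \<chi> \<tau> * \<chi> r * \<chi> (inv \<tau>)"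
    using C rW t itW G_comp unfolding one_dim_char_def by metis
  also have "\<dots> = \<chi> (\<tau> \<circ> inv \<tau>)" using C t itW \<open>\<chi> r = 1\<close> unfolding one_dim_char_def by simp
  also have "\<dots> = 1" using G_inv2[OF t] char_id[OF C] by simp
  finally show "\<chi> s = 1" .
qed

lemma cond_act:
  assumes C: "one_dim_char W (\<chi> :: _ \<Rightarrow> 'a::field)" and j: "length j = d" and t: "\<tau> \<in> W"
  shows "(\<forall>\<sigma>\<in>stabilizer W (act \<tau> j). \<chi> \<sigma> = 1) = (\<forall>\<sigma>\<in>stabilizer W j. \<chi> \<sigma> = 1)"
  using cond_act1[OF C j t] cond_act1[OF C _ G_inv[OF t], of "act \<tau> j"] act_inv_eq[OF t j] j
  by auto

lemma mono_act:
  assumes j: "length j = d" and t: "\<tau> \<in> W"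
  shows "(\<Prod>k<d. x (act \<tau> j ! k)) = (\<Prod>k<d. x (j ! k))"
proof -
  have p: "\<tau> permutes {1..d}" using G_perm[OF t] .
  have "(\<Prod>k<d. x (act \<tau> j ! k)) = (\<Prod>k<d. x (j ! (inv \<tau> (Suc k) - 1)))"
    using j by (intro prod.cong) (auto simp: nth_act)
  also have "\<dots> = (\<Prod>k<d. x (j ! k))"
  proof (rule prod.reindex_bij_witness[where i="\<lambda>k. \<tau> (Suc k) - 1" and j="\<lambda>k. inv \<tau> (Suc k) - 1"])
    fix a assume a: "a \<in> {..<d}"
    have r: "inv \<tau> (Suc a) \<in> {1..d}" using inv_perm_range[OF p] a by simp
    show "\<tau> (Suc (inv \<tau> (Suc a) - 1)) - 1 = a" using r permutes_inverses(1)[OF p] by simp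
    show "inv \<tau> (Suc a) - 1 \<in> {..<d}" using r by auto
  next
    fix b assume b: "b \<in> {..<d}"
    have r: "\<tau> (Suc b) \<in> {1..d}" using permutes_in_image[OF p] b by simp
    show "inv \<tau> (Suc (\<tau> (Suc b) - 1)) - 1 = b" using r permutes_inverses(2)[OF p] by simp
    show "\<tau> (Suc b) - 1 \<in> {..<d}" using r by auto
  qed simp
  finally show ?thesis .
qed

end


lemma cycle_prod:
  fixes x :: "nat \<Rightarrow> 'a::comm_ring_1"
  assumes p: "\<sigma> permutes {1..d}"
  shows "(\<Prod>s\<in>{1..d}. (\<Sum>i\<le>n. x i ^ s) ^ cycle_count d \<sigma> s) =
         (\<Sum>j\<in>{j\<in>tuples n d. act \<sigma> j = j}. \<Prod>k<d. x (j ! k))"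
proof -
  define A where "A = {1..d::nat}"
  define C where "C = orbit \<sigma> ` A"
  define P where "P = (\<lambda>s::nat. (\<Sum>i\<le>n. x i ^ s))"
  have perm: "permutation \<sigma>" using p permutation_permutes by blast
  have selfin: "\<And>a. a \<in> orbit \<sigma> a" using permutation_self_in_orbit[OF perm] .
  have orbA: "\<And>a. a \<in> A \<Longrightarrow> orbit \<sigma> a \<subseteq> A" unfolding A_def using permutes_orbit_subset[OF p] .
  have orbfin: "\<And>a. finite (orbit \<sigma> a)" using finite_orbit[OF selfin] .
  have orbeq: "\<And>a b. b \<in> orbit \<sigma> a \<Longrightarrow> orbit \<sigma> b = orbit \<sigma> a"
    using orbit_cyclic_eq3[OF cyclic_on_orbit'[OF perm]] by blast
  have finA: "finite A" unfolding A_def by simp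
  have finC: "finite C" unfolding C_def using finA by simp
  have Csub: "\<And>c. c \<in> C \<Longrightarrow> c \<subseteq> A" unfolding C_def using orbA by blast
  have Cne: "\<And>c. c \<in> C \<Longrightarrow> c \<noteq> {}" unfolding C_def using selfin by blast
  have Cfin: "\<And>c. c \<in> C \<Longrightarrow> finite c" unfolding C_def using orbfin by blast
  have "(\<Prod>s\<in>{1..d}. P s ^ cycle_count d \<sigma> s) = (\<Prod>s\<in>{1..d}. \<Prod>c\<in>{c\<in>C. card c = s}. P (card c))"
  proof (rule prod.cong[OF refl])
    fix s assume "s \<in> {1..d}"
    have e: "{c\<in>C. card c = s} = {orbit \<sigma> a | a. a \<in> {1..d} \<and> card (orbit \<sigma> a) = s}"
      unfolding C_def A_def by auto
    have "(\<Prod>c\<in>{c\<in>C. card c = s}. P (card c)) = (\<Prod>c\<in>{c\<in>C. card c = s}. P s)"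
      by (rule prod.cong) auto
    also have "\<dots> = P s ^ cycle_count d \<sigma> s" unfolding cycle_count_def e[symmetric] by simp
    finally show "P s ^ cycle_count d \<sigma> s = (\<Prod>c\<in>{c\<in>C. card c = s}. P (card c))" by simp
  qed
  also have "\<dots> = (\<Prod>c\<in>C. P (card c))"
  proof (rule prod.group)
    show "card ` C \<subseteq> {1..d}"
    proof
      fix s assume "s \<in> card ` C"
      then obtain c where c: "c \<in> C" "s = card c" by blast
      have "card c \<le> card A" using card_mono[OF finA Csub[OF c(1)]] .
      moreover have "card c \<ge> 1" using Cne[OF c(1)] Cfin[OF c(1)]
        by (simp add: Suc_leI card_gt_0_iff)
      ultimately show "s \<in> {1..d}" using c unfolding A_def by simp
    qed
  qed (use finC in auto)
  also have "\<dots> = (\<Prod>c\<in>C. \<Sum>i\<in>{..n}. x i ^ card c)" unfolding P_def by simp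
  also have "\<dots> = (\<Sum>g\<in>C \<rightarrow>\<^sub>E {..n}. \<Prod>c\<in>C. x (g c) ^ card c)"
    by (rule prod_sum_PiE) (use finC in auto)
  also have "\<dots> = (\<Sum>j\<in>{j\<in>tuples n d. act \<sigma> j = j}. \<Prod>k<d. x (j ! k))"
  proof (rule sum.reindex_bij_witness[where j="\<lambda>g. map (\<lambda>k. g (orbit \<sigma> (Suc k))) [0..<d]"
        and i="\<lambda>j. \<lambda>c\<in>C. j ! (Min c - 1)"])
    fix g assume g: "g \<in> C \<rightarrow>\<^sub>E {..n}"
    let ?j = "map (\<lambda>k. g (orbit \<sigma> (Suc k))) [0..<d]"
    show "(\<lambda>c\<in>C. ?j ! (Min c - 1)) = g"
    proof
      fix c show "(\<lambda>c\<in>C. ?j ! (Min c - 1)) c = g c"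
      proof (cases "c \<in> C")
        case True
        have m: "Min c \<in> c" using Cne[OF True] Cfin[OF True] by simp
        hence mA: "Min c \<in> A" using Csub[OF True] by blast
        have "orbit \<sigma> (Min c) = c" using True m orbeq unfolding C_def by blast
        moreover have "Min c - 1 < d" "Suc (Min c - 1) = Min c" using mA unfolding A_def by auto
        ultimately show ?thesis using True by simp
      next
        case False then show ?thesis using g by (simp add: PiE_def extensional_def)
      qed
    qed
    have "\<And>k. k < d \<Longrightarrow> orbit \<sigma> (Suc k) \<in> C" unfolding C_def A_def by auto
    hence len: "?j \<in> tuples n d" using g unfolding tuples_def by auto
    have fx: "act \<sigma> ?j = ?j"
    proof (rule nth_equalityI)
      fix k assume "k < length (act \<sigma> ?j)"
      hence k: "k < d" by simp
      have r: "inv \<sigma> (Suc k) \<in> {1..d}" using inv_perm_range[OF p k] .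
      have "orbit \<sigma> (Suc k) = orbit \<sigma> (\<sigma> (inv \<sigma> (Suc k)))"
        using permutes_inverses(1)[OF p] by simp
      also have "\<dots> = orbit \<sigma> (inv \<sigma> (Suc k))" using permutation_orbit_step[OF perm] .
      moreover have "inv \<sigma> (Suc k) - 1 < d" "Suc (inv \<sigma> (Suc k) - 1) = inv \<sigma> (Suc k)" using r by auto
      ultimately show "act \<sigma> ?j ! k = ?j ! k" using k by (simp add: nth_act)
    qed simp
    show "?j \<in> {j\<in>tuples n d. act \<sigma> j = j}" using len fx by simp
    have "(\<Prod>k<d. x (?j ! k)) = (\<Prod>k<d. x (g (orbit \<sigma> (Suc k))))" by simp
    also have "\<dots> = (\<Prod>a\<in>A. x (g (orbit \<sigma> a)))"
    proof -
      have "A = Suc ` {..<d}" unfolding A_def by (simp add: image_Suc_lessThan)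
      thus ?thesis by (simp add: prod.reindex)
    qed
    also have "\<dots> = (\<Prod>c\<in>C. \<Prod>a\<in>{a\<in>A. orbit \<sigma> a = c}. x (g (orbit \<sigma> a)))"
      by (rule prod.group[symmetric]) (use finA finC in \<open>auto simp: C_def\<close>)
    also have "\<dots> = (\<Prod>c\<in>C. x (g c) ^ card c)"
    proof (rule prod.cong[OF refl])
      fix c assume c: "c \<in> C"
      have "{a\<in>A. orbit \<sigma> a = c} = c"
      proof
        show "{a\<in>A. orbit \<sigma> a = c} \<subseteq> c" using selfin by blast
        show "c \<subseteq> {a\<in>A. orbit \<sigma> a = c}" using c Csub orbeq unfolding C_def by blast
      qed
      moreover have "(\<Prod>a\<in>c. x (g (orbit \<sigma> a))) = (\<Prod>a\<in>c. x (g c))"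
        using c orbeq unfolding C_def by (intro prod.cong) auto
      ultimately show "(\<Prod>a\<in>{a\<in>A. orbit \<sigma> a = c}. x (g (orbit \<sigma> a))) = x (g c) ^ card c"
        by simp
    qed
    finally show "(\<Prod>k<d. x (?j ! k)) = (\<Prod>c\<in>C. x (g c) ^ card c)" .
  next
    fix j assume j: "j \<in> {j\<in>tuples n d. act \<sigma> j = j}"
    hence jl: "length j = d" and jn: "\<forall>k<d. j ! k \<le> n" and jf: "act \<sigma> j = j"
      unfolding tuples_def by auto
    have step: "\<And>k. k \<in> A \<Longrightarrow> j ! (\<sigma> k - 1) = j ! (k - 1)"
    proof -
      fix k assume k: "k \<in> A"
      have sk: "\<sigma> k \<in> {1..d}" using permutes_in_image[OF p] k unfolding A_def by simp
      hence "\<sigma> k - 1 < d" by auto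
      hence "j ! (\<sigma> k - 1) = act \<sigma> j ! (\<sigma> k - 1)" using jf by simp
      also have "\<dots> = j ! (k - 1)" using \<open>\<sigma> k - 1 < d\<close> sk jl permutes_inverses(2)[OF p]
        by (simp add: nth_act)
      finally show "j ! (\<sigma> k - 1) = j ! (k - 1)" .
    qed
    have const: "\<And>a b. a \<in> A \<Longrightarrow> b \<in> orbit \<sigma> a \<Longrightarrow> j ! (b - 1) = j ! (a - 1)"
    proof -
      fix a b assume a: "a \<in> A" and b: "b \<in> orbit \<sigma> a"
      from b show "j ! (b - 1) = j ! (a - 1)"
      proof induct
        case base then show ?case using step a by simp
      next
        case (step y)
        have "y \<in> A" using step.hyps(1) orbA[OF a] by blast
        then show ?case using step.hyps(2) \<open>\<And>k. k \<in> A \<Longrightarrow> j ! (\<sigma> k - 1) = j ! (k - 1)\<close> by simp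
      qed
    qed
    let ?g = "\<lambda>c\<in>C. j ! (Min c - 1)"
    show "map (\<lambda>k. ?g (orbit \<sigma> (Suc k))) [0..<d] = j"
    proof (rule nth_equalityI)
      fix k assume "k < length (map (\<lambda>k. ?g (orbit \<sigma> (Suc k))) [0..<d])"
      hence k: "k < d" by simp
      have kA: "Suc k \<in> A" using k unfolding A_def by simp
      have inC: "orbit \<sigma> (Suc k) \<in> C" using kA unfolding C_def by blast
      have "Min (orbit \<sigma> (Suc k)) \<in> orbit \<sigma> (Suc k)" using orbfin selfin
        using Min_in[OF orbfin orbit_nonempty] by blast
      hence "j ! (Min (orbit \<sigma> (Suc k)) - 1) = j ! k" using const[OF kA] by simp
      then show "map (\<lambda>k. ?g (orbit \<sigma> (Suc k))) [0..<d] ! k = j ! k" using k inC by simp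
    qed (simp add: jl)
    show "?g \<in> C \<rightarrow>\<^sub>E {..n}"
    proof
      fix c assume c: "c \<in> C"
      have "Min c \<in> A" using Cne[OF c] Cfin[OF c] Csub[OF c] by (meson Min_in subsetD)
      hence "Min c - 1 < d" unfolding A_def by auto
      then show "?g c \<in> {..n}" using jn c by simp
    qed simp
  qed
  finally show ?thesis unfolding P_def .
qed


theorem corollary2p1p4:
  fixes W :: "(nat \<Rightarrow> nat) set" and \<chi> :: "(nat \<Rightarrow> nat) \<Rightarrow> 'a::field_char_0"
    and n d :: nat and x :: "nat \<Rightarrow> 'a"
  assumes "perm_group d W" and "one_dim_char W \<chi>"
  shows "g_poly n d W \<chi> x = Z_poly d W \<chi> (\<lambda>s. \<Sum>i\<le>n. x i ^ s)"
proof -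
  note G = assms(1) and C = assms(2)
  define T where "T = tuples n d"
  define mono where "mono = (\<lambda>j. \<Prod>k<d. x (j ! k))"
  define cond where "cond = (\<lambda>j. \<forall>\<sigma>\<in>stabilizer W j. \<chi> \<sigma> = 1)"
  define cc where "cc = (\<lambda>j. if cond j then (of_nat (card (stabilizer W j)) :: 'a) else 0)"
  define rep where "rep = (\<lambda>j. Min (orb W j))"
  define R where "R = rep ` T"
  have finW: "finite W" using G_fin[OF G] .
  have finT: "finite T"
  proof -
    have "T \<subseteq> {xs. set xs \<subseteq> {..n} \<and> length xs = d}"
      unfolding T_def tuples_def by (auto simp: in_set_conv_nth)
    moreover have "finite {xs. set xs \<subseteq> {..n} \<and> length xs = d}"
      by (rule finite_lists_length_eq) simp
    ultimately show ?thesis by (rule finite_subset)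
  qed
  have lenT: "\<And>j. j \<in> T \<Longrightarrow> length j = d" unfolding T_def tuples_def by auto
  have finorb: "\<And>j. finite (orb W j)" unfolding orb_def using finW by simp
  have orbne: "\<And>j. orb W j \<noteq> {}" using self_in_orb[OF G] by blast
  have repin: "\<And>j. rep j \<in> orb W j" unfolding rep_def by (rule Min_in[OF finorb orbne])
  have cardW: "card W > 0" using finW G_id[OF G] by (auto simp: card_gt_0_iff)
  have fib: "\<And>r. r \<in> R \<Longrightarrow> {j\<in>T. rep j = r} = orb W r \<and> r \<in> T \<and> rep r = r"
  proof -
    fix r assume "r \<in> R"
    then obtain k where k: "k \<in> T" "r = rep k" unfolding R_def by blast
    have rk: "orb W r = orb W k" using orb_mem_eq[OF G lenT[OF k(1)]] repin k(2) by blast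
    have rT: "r \<in> T" using orb_tuples[OF G] k repin unfolding T_def by blast
    have rr: "rep r = r" using rk k(2) unfolding rep_def by simp
    have "{j\<in>T. rep j = r} = orb W r"
    proof
      show "{j\<in>T. rep j = r} \<subseteq> orb W r"
      proof
        fix j assume j: "j \<in> {j\<in>T. rep j = r}"
        hence "orb W r = orb W j" using orb_mem_eq[OF G lenT] repin by blast
        thus "j \<in> orb W r" using self_in_orb[OF G] by blast
      qed
      show "orb W r \<subseteq> {j\<in>T. rep j = r}"
      proof
        fix j assume j: "j \<in> orb W r"
        have "j \<in> T" using orb_tuples[OF G] rT j unfolding T_def by blast
        moreover have "orb W j = orb W r" using orb_mem_eq[OF G lenT[OF rT] j] .
        ultimately show "j \<in> {j\<in>T. rep j = r}" using rr unfolding rep_def by simp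
      qed
    qed
    thus "{j\<in>T. rep j = r} = orb W r \<and> r \<in> T \<and> rep r = r" using rT rr by blast
  qed
  have inv_orb: "\<And>r j. r \<in> T \<Longrightarrow> j \<in> orb W r \<Longrightarrow> mono j * cc j = mono r * cc r"
  proof -
    fix r j assume r: "r \<in> T" and j: "j \<in> orb W r"
    then obtain \<tau> where t: "\<tau> \<in> W" "j = act \<tau> r" unfolding orb_def by blast
    have "mono j = mono r" unfolding mono_def t(2) using mono_act[OF G lenT[OF r] t(1)] .
    moreover have "cond j = cond r" unfolding cond_def t(2) using cond_act[OF G C lenT[OF r] t(1)] .
    moreover have "card (stabilizer W j) = card (stabilizer W r)"
    proof -
      have "orb W j = orb W r" using orb_mem_eq[OF G lenT[OF r] j] .
      moreover have "card (orb W r) > 0" using finorb orbne by (simp add: card_gt_0_iff)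
      moreover have "card (orb W j) * card (stabilizer W j) = card W"
        using orbit_stab[OF G, of j] t lenT[OF r] by simp
      moreover have "card (orb W r) * card (stabilizer W r) = card W"
        using orbit_stab[OF G lenT[OF r]] .
      ultimately show ?thesis by (metis mult_left_cancel not_less0)
    qed
    ultimately show "mono j * cc j = mono r * cc r" unfolding cc_def by simp
  qed
  have "Z_poly d W \<chi> (\<lambda>s. \<Sum>i\<le>n. x i ^ s) =
        (1 / of_nat (card W)) * (\<Sum>\<sigma>\<in>W. \<chi> \<sigma> * (\<Sum>j\<in>{j\<in>T. act \<sigma> j = j}. mono j))"
    unfolding Z_poly_def T_def mono_def
    using cycle_prod[OF G_perm[OF G]] by (intro arg_cong2[where f="(*)"] sum.cong) auto
  also have "(\<Sum>\<sigma>\<in>W. \<chi> \<sigma> * (\<Sum>j\<in>{j\<in>T. act \<sigma> j = j}. mono j)) =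
      (\<Sum>\<sigma>\<in>W. \<Sum>j\<in>T. if act \<sigma> j = j then \<chi> \<sigma> * mono j else 0)"
    using finT by (simp add: sum.inter_filter sum_distrib_left if_distrib cong: if_cong)
  also have "\<dots> = (\<Sum>j\<in>T. \<Sum>\<sigma>\<in>W. if act \<sigma> j = j then \<chi> \<sigma> * mono j else 0)"
    by (rule sum.swap)
  also have "\<dots> = (\<Sum>j\<in>T. mono j * cc j)"
  proof (rule sum.cong[OF refl])
    fix j assume j: "j \<in> T"
    have "(\<Sum>\<sigma>\<in>W. if act \<sigma> j = j then \<chi> \<sigma> * mono j else 0) = (\<Sum>\<sigma>\<in>stabilizer W j. \<chi> \<sigma> * mono j)"
      unfolding stabilizer_def using finW by (simp add: sum.inter_filter)
    also have "\<dots> = mono j * (\<Sum>\<sigma>\<in>stabilizer W j. \<chi> \<sigma>)" by (simp add: sum_distrib_left mult.commute)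
    also have "\<dots> = mono j * cc j" unfolding cc_def cond_def using stab_sum[OF G C lenT[OF j]] by simp
    finally show "(\<Sum>\<sigma>\<in>W. if act \<sigma> j = j then \<chi> \<sigma> * mono j else 0) = mono j * cc j" .
  qed
  also have "\<dots> = (\<Sum>r\<in>R. \<Sum>j\<in>{j\<in>T. rep j = r}. mono j * cc j)"
    by (rule sum.group[symmetric]) (use finT in \<open>auto simp: R_def\<close>)
  also have "\<dots> = (\<Sum>r\<in>R. if cond r then of_nat (card W) * mono r else 0)"
  proof (rule sum.cong[OF refl])
    fix r assume r: "r \<in> R"
    have "(\<Sum>j\<in>{j\<in>T. rep j = r}. mono j * cc j) = (\<Sum>j\<in>orb W r. mono r * cc r)"
      using fib[OF r] inv_orb by (intro sum.cong) auto
    also have "\<dots> = of_nat (card (orb W r)) * (mono r * cc r)" by simp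
    also have "\<dots> = (if cond r then of_nat (card W) * mono r else 0)"
    proof -
      have e: "card W = card (orb W r) * card (stabilizer W r)"
        using orbit_stab[OF G lenT] fib[OF r] by simp
      show ?thesis by (cases "cond r") (simp_all add: cc_def e)
    qed
    finally show "(\<Sum>j\<in>{j\<in>T. rep j = r}. mono j * cc j) = (if cond r then of_nat (card W) * mono r else 0)" .
  qed
  also have "\<dots> = of_nat (card W) * (\<Sum>r\<in>{r\<in>R. cond r}. mono r)"
    using finT unfolding R_def by (simp add: sum.inter_filter sum_distrib_left if_distrib cong: if_cong)
  finally have Z: "Z_poly d W \<chi> (\<lambda>s. \<Sum>i\<le>n. x i ^ s) = (\<Sum>r\<in>{r\<in>R. cond r}. mono r)"
    using cardW by simp
  have "J_set n d W \<chi> = {r\<in>R. cond r}"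
  proof (intro set_eqI iffI)
    fix j assume j: "j \<in> J_set n d W \<chi>"
    hence jT: "j \<in> T" and jle: "\<forall>\<sigma>\<in>W. j \<le> act \<sigma> j" and jc: "cond j"
      unfolding J_set_def T_def cond_def lex_le_def by (auto simp: list_le_def list_less_def)
    have "\<forall>y\<in>orb W j. j \<le> y" using jle unfolding orb_def by blast
    hence "rep j = j" unfolding rep_def
      by (intro Min_eqI[OF finorb]) (auto simp: self_in_orb[OF G])
    hence "j \<in> R" unfolding R_def using jT by (metis image_eqI)
    thus "j \<in> {r\<in>R. cond r}" using jc by simp
  next
    fix j assume j: "j \<in> {r\<in>R. cond r}"
    hence f: "j \<in> T" "rep j = j" and jc: "cond j" using fib by auto
    have "\<forall>\<sigma>\<in>W. j \<le> act \<sigma> j"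
    proof
      fix \<sigma> assume "\<sigma> \<in> W"
      hence "act \<sigma> j \<in> orb W j" by (rule act_in_orb[OF G])
      thus "j \<le> act \<sigma> j" using Min_le[OF finorb, of "act \<sigma> j" j] f(2) unfolding rep_def by simp
    qed
    thus "j \<in> J_set n d W \<chi>" using f jc
      unfolding J_set_def T_def cond_def lex_le_def by (auto simp: list_le_def list_less_def)
  qed
  then show ?thesis unfolding g_poly_def Z mono_def by simp
qed

end
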